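(* For integers $k\geq l\geq 0$ and $n\geq 0$, let $q^*_n(k,l)$ be the number of ways to write the vector $(k,l)$ as an unordered sum of $n$ vectors (a vector partition into $n$ parts) each lying in $\{(0,0),(1,0),(0,1),(1,1)\}$, where each of $(0,0)$ and $(1,1)$ is used at most once while $(1,0)$ and $(0,1)$ may be used any number of times. Then $$\{S_{(k,l)'}\}_n=\begin{cases}q^*_n(k,l)-q^*_n(k+1,l-1)&\text{if } l>0,\\ q^*_n(k,l)&\text{if } l=0.\end{cases}$$
   Context: For $i\geq1$, $X_i(\sigma)$ is the number of $i$-cycles of $\sigma$. For a partition $\alpha=1^{a_1}2^{a_2}\cdots$ let $\binom X\alpha=\prod_i\binom{X_i}{a_i}$, $|\alpha|=\sum ia_i$, $l(\alpha)=\sum a_i$. For $m\geq0$ let $E_m=\sum_{\alpha\vdash m}(-1)^{|\alpha|-l(\alpha)}\binom X\alpha$ (so $E_0=1$), and set $E_m=0$ for $m<0$. Define $S_{(k,l)'}=E_kE_l-E_{k+1}E_{l-1}$ (the character polynomial of $W_{(k,l)'}(\mathbb C^n)$, $(k,l)'$ the conjugate partition). The signed moment of $p\in\mathbb C[X_1,X_2,\dotsc]$ is $\{p\}_n=\frac1{n!}\sum_{\sigma\in S_n}\mathrm{sgn}(\sigma)p(X_1(\sigma),X_2(\sigma),\dotsc)$. *)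

theory Defs
  imports Complex_Main "HOL-Combinatorics.Combinatorics" "HOL-Library.Multiset"
begin

definition cycle_count :: "nat \<Rightarrow> (nat \<Rightarrow> nat) \<Rightarrow> nat \<Rightarrow> nat" where
  "cycle_count n \<sigma> i = card {orbit \<sigma> x | x. x \<in> {1..n} \<and> card (orbit \<sigma> x) = i}"

text \<open>Partitions alpha = 1^a1 2^a2 ... of m, encoded by multiplicity functions a
  supported on {1..m} with sum i*a_i = m.\<close>
definition partitions_mult :: "nat \<Rightarrow> (nat \<Rightarrow> nat) set" where
  "partitions_mult m = {a. (\<forall>i. a i \<noteq> 0 \<longrightarrow> 1 \<le> i \<and> i \<le> m) \<and> (\<Sum>i=1..m. i * a i) = m}"

text \<open>E_m evaluated at cycle counts X (X i = X_i); E_m = 0 for m < 0.\<close>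
definition E_poly :: "int \<Rightarrow> (nat \<Rightarrow> nat) \<Rightarrow> int" where
  "E_poly m X = (if m < 0 then 0 else
     (\<Sum>a\<in>partitions_mult (nat m).
        (-1) ^ (nat m - (\<Sum>i=1..nat m. a i)) * (\<Prod>i=1..nat m. int (X i choose a i))))"

definition S_conj :: "nat \<Rightarrow> nat \<Rightarrow> (nat \<Rightarrow> nat) \<Rightarrow> int" where
  "S_conj k l X = E_poly (int k) X * E_poly (int l) X
                 - E_poly (int k + 1) X * E_poly (int l - 1) X"

definition signed_moment :: "nat \<Rightarrow> ((nat \<Rightarrow> nat) \<Rightarrow> int) \<Rightarrow> real" where
  "signed_moment n p = (1 / fact n) *
     (\<Sum>\<sigma>\<in>{\<sigma>. \<sigma> permutes {1..n}}. real_of_int (sign \<sigma> * p (cycle_count n \<sigma>)))"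

definition qstar :: "nat \<Rightarrow> nat \<Rightarrow> nat \<Rightarrow> nat" where
  "qstar n k l = card {M :: (nat \<times> nat) multiset.
      set_mset M \<subseteq> {(0,0),(1,0),(0,1),(1,1)} \<and> size M = n \<and>
      count M (0,0) \<le> 1 \<and> count M (1,1) \<le> 1 \<and>
      sum_mset (image_mset fst M) = k \<and> sum_mset (image_mset snd M) = l}"

end

theory Submission
  imports Defs
begin


lemma sign_cycle_of_list:
  "distinct cs \<Longrightarrow> sign (cycle_of_list cs) = (-1) ^ (length cs - 1)"
proof (induction cs rule: cycle_of_list.induct)
  case (1 i j cs)
  have "sign (cycle_of_list (i # j # cs)) = sign (transpose i j) * sign (cycle_of_list (j # cs))"
    by (simp add: sign_compose permutation_swap_id permutation_of_cycle)
  also have "\<dots> = - ((-1) ^ (length (j # cs) - 1))" using 1 by (simp add: sign_swap_id)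
  finally show ?case by (simp del: cycle_of_list.simps)
qed simp_all

lemma perm_restrict_orbit_cycle:
  assumes "permutation p"
  shows "perm_restrict p (orbit p s) = cycle_of_list (support p s)"
    and "set (support p s) = orbit p s"
proof -
  show st: "set (support p s) = orbit p s"
    using support_set[OF assms] orbit_altdef_permutation[OF assms] by auto
  show "perm_restrict p (orbit p s) = cycle_of_list (support p s)"
  proof
    fix b show "perm_restrict p (orbit p s) b = cycle_of_list (support p s) b"
    proof (cases "b \<in> orbit p s")
      case True
      then show ?thesis using cycle_restrict[OF assms, of b s] st by (simp add: perm_restrict_simps)
    next
      case False
      then show ?thesis using id_outside_supp[of b "support p s"] st by (simp add: perm_restrict_simps)
    qed
  qed
qed

lemma card_orbit_support:
  assumes "permutation p"
  shows "card (orbit p s) = length (support p s)"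
  using perm_restrict_orbit_cycle(2)[OF assms] cycle_of_permutation[OF assms, of s]
  by (metis distinct_card)

lemma sign_perm_restrict_orbit:
  assumes "permutation p"
  shows "sign (perm_restrict p (orbit p s)) = (-1) ^ (card (orbit p s) - 1)"
  using perm_restrict_orbit_cycle[OF assms] card_orbit_support[OF assms]
    sign_cycle_of_list cycle_of_permutation[OF assms] by metis

lemma orbit_eq_of_mem:
  assumes "permutation p" "y \<in> orbit p x"
  shows "orbit p y = orbit p x"
  using orbit_cyclic_eq3[OF cyclic_on_orbit'[OF assms(1)] assms(2)] .

lemma sign_orbits:
  assumes "finite S" "p permutes S"
  shows "sign p = (-1) ^ (card S - card ((\<lambda>x. orbit p x) ` S))"
  using assms
proof (induction S arbitrary: p rule: finite_psubset_induct)
  case (psubset S)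
  show ?case
  proof (cases "S = {}")
    case True
    then show ?thesis using psubset.prems by simp
  next
    case False
    then obtain s where s: "s \<in> S" by auto
    have perm: "permutation p" using psubset.prems psubset.hyps permutation_permutes by blast
    define c where "c = orbit p s"
    have cS: "c \<subseteq> S" using permutes_orbit_subset[OF psubset.prems s] c_def by simp
    have sc: "s \<in> c" using permutation_self_in_orbit[OF perm] c_def by simp
    have cyc: "cyclic_on p c" using cyclic_on_orbit'[OF perm] c_def by simp
    define S' where "S' = S - c"
    have psub: "S' \<subset> S" using sc s S'_def by blast
    define p' where "p' = perm_restrict p S'"
    have p'perm: "p' permutes S'" unfolding p'_def S'_def
      using perm_restrict_diff_cyclic[OF psubset.prems cyc] .
    have IH: "sign p' = (-1) ^ (card S' - card ((\<lambda>x. orbit p' x) ` S'))"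
      using psubset.IH[OF psub p'perm] .
    have orb_eq: "orbit p' x = orbit p x" if "x \<in> S'" for x
    proof (rule orbit_cong)
      show "x \<in> orbit p x" using permutation_self_in_orbit[OF perm] .
      fix y assume y: "y \<in> orbit p x"
      have "y \<in> S" using permutes_orbit_subset[OF psubset.prems] y that S'_def by blast
      moreover have "y \<notin> c"
      proof
        assume "y \<in> c"
        then have "orbit p y = c" using orbit_eq_of_mem[OF perm] c_def by simp
        moreover have "orbit p y = orbit p x" using orbit_eq_of_mem[OF perm y] .
        ultimately have "x \<in> c" using permutation_self_in_orbit[OF perm, of x] by simp
        then show False using that S'_def by simp
      qed
      ultimately show "p' y = p y" unfolding p'_def S'_def by (simp add: perm_restrict_simps)
    qed
    have o1: "(\<lambda>x. orbit p' x) ` S' = (\<lambda>x. orbit p x) ` S'" using orb_eq by auto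
    have o2: "(\<lambda>x. orbit p x) ` S = insert c ((\<lambda>x. orbit p x) ` S')"
    proof -
      have "S = c \<union> S'" using cS S'_def by blast
      moreover have "(\<lambda>x. orbit p x) ` c = {c}"
      proof -
        have "\<And>x. x \<in> c \<Longrightarrow> orbit p x = c" using orbit_eq_of_mem[OF perm] c_def by blast
        then show ?thesis using sc by blast
      qed
      ultimately show ?thesis by (metis image_Un insert_is_Un)
    qed
    have o3: "c \<notin> (\<lambda>x. orbit p x) ` S'"
    proof
      assume "c \<in> (\<lambda>x. orbit p x) ` S'"
      then obtain x where "x \<in> S'" "c = orbit p x" by auto
      then show False using permutation_self_in_orbit[OF perm, of x] S'_def by auto
    qed
    have fin: "finite S'" using psubset.hyps S'_def by simp
    have cardO: "card ((\<lambda>x. orbit p x) ` S) = card ((\<lambda>x. orbit p x) ` S') + 1"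
      using o2 o3 fin by simp
    have cardS: "card S = card S' + card c"
      using cS S'_def psubset.hyps by (metis card_Diff_subset finite_subset add.commute le_add_diff_inverse card_mono)
    have le1: "card ((\<lambda>x. orbit p x) ` S') \<le> card S'" using card_image_le[OF fin] by blast
    have c1: "card c \<ge> 1" using sc cS psubset.hyps
      by (metis One_nat_def Suc_leI card_gt_0_iff empty_iff finite_subset)
    have decomp: "p = perm_restrict p S' \<circ> perm_restrict p c"
    proof -
      have "perm_restrict p S' \<circ> perm_restrict p c = perm_restrict p (S' \<union> c)"
        by (rule perm_restrict_comp) (use cyc S'_def in auto)
      also have "S' \<union> c = S" using cS S'_def by blast
      finally show ?thesis using perm_restrict_id[OF psubset.prems] by (simp add: comp_def)
    qed
    have "sign p = sign (p' \<circ> perm_restrict p c)" using decomp p'_def by simp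
    also have "\<dots> = sign p' * sign (perm_restrict p c)"
    proof (rule sign_compose)
      show "permutation p'" using p'perm fin permutation_permutes by blast
      show "permutation (perm_restrict p c)"
        using perm_restrict_orbit_cycle[OF perm] c_def permutation_of_cycle by metis
    qed
    also have "\<dots> = (-1) ^ (card S' - card ((\<lambda>x. orbit p x) ` S')) * (-1) ^ (card c - 1)"
      using IH o1 sign_perm_restrict_orbit[OF perm] c_def by simp
    also have "\<dots> = (-1) ^ ((card S' - card ((\<lambda>x. orbit p x) ` S')) + (card c - 1))"
      by (simp add: power_add)
    also have "(card S' - card ((\<lambda>x. orbit p x) ` S')) + (card c - 1) = card S - card ((\<lambda>x. orbit p x) ` S)"
      using cardO cardS le1 c1 by simp
    finally show ?thesis .
  qed
qed



definition orbs :: "('a \<Rightarrow> 'a) \<Rightarrow> 'a set \<Rightarrow> 'a set set" where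
  "orbs p A = (\<lambda>x. orbit p x) ` A"

definition sR :: "('a \<Rightarrow> 'a) \<Rightarrow> 'a set \<Rightarrow> int" where
  "sR p A = sign (perm_restrict p A)"

lemma PR_permutes:
  assumes "p permutes S" "p ` A = A"
  shows "perm_restrict p A permutes A"
proof (rule bij_imp_permutes)
  have "inj_on p A" using permutes_inj[OF assms(1)] by (metis inj_on_subset subset_UNIV)
  then have "bij_betw p A A" using assms(2) by (simp add: bij_betw_def)
  then show "bij_betw (perm_restrict p A) A A"
    by (rule bij_betw_cong[THEN iffD1, rotated]) (simp add: perm_restrict_simps)
  show "\<And>x. x \<notin> A \<Longrightarrow> perm_restrict p A x = x" by (simp add: perm_restrict_simps)
qed

lemma orbit_subset_inv:
  assumes "p ` A = A" "x \<in> A"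
  shows "orbit p x \<subseteq> A"
proof
  fix y assume "y \<in> orbit p x"
  then show "y \<in> A" by induct (use assms in auto)
qed

lemma sR_orbs:
  assumes "finite S" "p permutes S" "A \<subseteq> S" "p ` A = A"
  shows "sR p A = (-1) ^ (card A - card (orbs p A))"
proof -
  have fA: "finite A" using assms finite_subset by blast
  have pa: "perm_restrict p A permutes A" using PR_permutes[OF assms(2,4)] .
  have "orbit (perm_restrict p A) x = orbit p x" if "x \<in> A" for x
  proof (rule orbit_cong0[symmetric])
    show "x \<in> A" by fact
    show "p \<in> A \<rightarrow> A" using assms(4) by auto
    show "\<And>y. y \<in> A \<Longrightarrow> p y = perm_restrict p A y" by (simp add: perm_restrict_simps)
  qed
  then have "orbs (perm_restrict p A) A = orbs p A" unfolding orbs_def by auto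
  then show ?thesis using sign_orbits[OF fA pa] unfolding sR_def orbs_def by simp
qed

lemma orbit_image_self:
  assumes "finite S" "p permutes S" "x \<in> S"
  shows "p ` orbit p x = orbit p x"
proof -
  have sub: "p ` orbit p x \<subseteq> orbit p x" by (auto intro: orbit.intros(2))
  have fo: "finite (orbit p x)" using permutes_orbit_subset[OF assms(2,3)] assms(1) finite_subset by blast
  have "inj_on p (orbit p x)" using permutes_inj[OF assms(2)] by (metis inj_on_subset subset_UNIV)
  then have "card (p ` orbit p x) = card (orbit p x)" by (rule card_image)
  then show ?thesis using card_subset_eq[OF fo sub] by simp
qed

lemma orbs_facts:
  assumes "finite S" "p permutes S"
  shows "\<And>c. c \<in> orbs p S \<Longrightarrow> c \<subseteq> S \<and> p ` c = c \<and> c \<noteq> {} \<and> finite c"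
    and "\<And>c y. c \<in> orbs p S \<Longrightarrow> y \<in> c \<Longrightarrow> orbit p y = c"
    and "pairwise disjnt (orbs p S)"
    and "finite (orbs p S)"
proof -
  have perm: "permutation p" using assms permutation_permutes by blast
  show 1: "c \<subseteq> S \<and> p ` c = c \<and> c \<noteq> {} \<and> finite c" if cin: "c \<in> orbs p S" for c
  proof -
    obtain x where x: "x \<in> S" "c = orbit p x" using cin unfolding orbs_def by auto
    then show ?thesis using permutes_orbit_subset[OF assms(2) x(1)] orbit_image_self[OF assms x(1)]
      orbit_nonempty assms(1) finite_subset by metis
  qed
  show 2: "orbit p y = c" if cin: "c \<in> orbs p S" "y \<in> c" for c y
  proof -
    obtain x where x: "x \<in> S" "c = orbit p x" using cin unfolding orbs_def by auto
    then show ?thesis using orbit_eq_of_mem[OF perm] cin by simp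
  qed
  show "pairwise disjnt (orbs p S)"
    unfolding pairwise_def disjnt_def
  proof (intro ballI impI)
    fix c d assume "c \<in> orbs p S" "d \<in> orbs p S" "c \<noteq> d"
    then show "c \<inter> d = {}" using 2 by blast
  qed
  show "finite (orbs p S)" unfolding orbs_def using assms(1) by simp
qed

lemma Union_orbs:
  assumes "finite S" "p permutes S" "T \<subseteq> orbs p S"
  shows "\<Union>T \<subseteq> S" "p ` \<Union>T = \<Union>T" "orbs p (\<Union>T) = T"
proof -
  note F = orbs_facts[OF assms(1,2)]
  show "\<Union>T \<subseteq> S" using F(1) assms(3) by blast
  have H: "\<And>c. c \<in> T \<Longrightarrow> p ` c = c" using F(1) assms(3) by blast
  have "p ` \<Union>T = (\<Union>c\<in>T. p ` c)" by (rule image_Union)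
  also have "\<dots> = (\<Union>c\<in>T. c)" using H by simp
  finally show "p ` \<Union>T = \<Union>T" by simp
  show "orbs p (\<Union>T) = T"
  proof
    show "orbs p (\<Union>T) \<subseteq> T" unfolding orbs_def using F(2) assms(3) by auto
    show "T \<subseteq> orbs p (\<Union>T)"
    proof
      fix c assume c: "c \<in> T"
      then obtain y where "y \<in> c" using F(1) assms(3) by blast
      then show "c \<in> orbs p (\<Union>T)" unfolding orbs_def using F(2) assms(3) c
        by (metis UnionI image_eqI subsetD)
    qed
  qed
qed

lemma Union_orbs_inv:
  assumes "finite S" "p permutes S" "A \<subseteq> S" "p ` A = A"
  shows "orbs p A \<subseteq> orbs p S" "\<Union>(orbs p A) = A"
proof -
  have perm: "permutation p" using assms permutation_permutes by blast
  show "orbs p A \<subseteq> orbs p S" unfolding orbs_def using assms(3) by auto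
  show "\<Union>(orbs p A) = A"
    unfolding orbs_def using orbit_subset_inv[OF assms(4)] permutation_self_in_orbit[OF perm] by blast
qed

definition Fm :: "'a set \<Rightarrow> ('a \<Rightarrow> 'a) \<Rightarrow> nat \<Rightarrow> int" where
  "Fm S p m = (\<Sum>A \<in> {A. A \<subseteq> S \<and> p ` A = A \<and> card A = m}. sR p A)"

lemma Fm_orbs:
  assumes "finite S" "p permutes S"
  shows "Fm S p m = (\<Sum>T \<in> {T. T \<subseteq> orbs p S \<and> card (\<Union>T) = m}. (-1) ^ (m - card T))"
proof -
  have bij: "bij_betw Union {T. T \<subseteq> orbs p S \<and> card (\<Union>T) = m} {A. A \<subseteq> S \<and> p ` A = A \<and> card A = m}"
  proof (rule bij_betw_byWitness[where f' = "orbs p"])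
    show "\<forall>a\<in>{T. T \<subseteq> orbs p S \<and> card (\<Union> T) = m}. orbs p (\<Union> a) = a"
      using Union_orbs(3)[OF assms] by simp
    show "\<forall>a'\<in>{A. A \<subseteq> S \<and> p ` A = A \<and> card A = m}. \<Union> (orbs p a') = a'"
      using Union_orbs_inv(2)[OF assms] by simp
    show "Union ` {T. T \<subseteq> orbs p S \<and> card (\<Union> T) = m} \<subseteq> {A. A \<subseteq> S \<and> p ` A = A \<and> card A = m}"
    proof
      fix A assume "A \<in> Union ` {T. T \<subseteq> orbs p S \<and> card (\<Union> T) = m}"
      then obtain T where T: "T \<subseteq> orbs p S" "card (\<Union> T) = m" "A = \<Union>T" by blast
      show "A \<in> {A. A \<subseteq> S \<and> p ` A = A \<and> card A = m}"
        unfolding T(3) using Union_orbs(1,2)[OF assms T(1)] T(2) by simp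
    qed
    show "orbs p ` {A. A \<subseteq> S \<and> p ` A = A \<and> card A = m} \<subseteq> {T. T \<subseteq> orbs p S \<and> card (\<Union> T) = m}"
    proof
      fix T assume "T \<in> orbs p ` {A. A \<subseteq> S \<and> p ` A = A \<and> card A = m}"
      then obtain A where A: "A \<subseteq> S" "p ` A = A" "card A = m" "T = orbs p A" by blast
      show "T \<in> {T. T \<subseteq> orbs p S \<and> card (\<Union> T) = m}"
        unfolding A(4) using Union_orbs_inv[OF assms A(1,2)] A(3) by simp
    qed
  qed
  have "Fm S p m = (\<Sum>T \<in> {T. T \<subseteq> orbs p S \<and> card (\<Union>T) = m}. sR p (\<Union>T))"
    unfolding Fm_def by (rule sum.reindex_bij_betw[OF bij, symmetric])
  also have "\<dots> = (\<Sum>T \<in> {T. T \<subseteq> orbs p S \<and> card (\<Union>T) = m}. (-1) ^ (m - card T))"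
  proof (rule sum.cong[OF refl])
    fix T assume "T \<in> {T. T \<subseteq> orbs p S \<and> card (\<Union>T) = m}"
    then have T: "T \<subseteq> orbs p S" "card (\<Union>T) = m" by auto
    show "sR p (\<Union>T) = (-1) ^ (m - card T)"
      using sR_orbs[OF assms Union_orbs(1,2)[OF assms T(1)]] Union_orbs(3)[OF assms T(1)] T(2) by simp
  qed
  finally show ?thesis .
qed



definition ty :: "('c \<Rightarrow> nat) \<Rightarrow> 'c set \<Rightarrow> nat \<Rightarrow> nat" where
  "ty w T = (\<lambda>i. card {c\<in>T. w c = i})"

lemma sum_by_weight:
  assumes "finite T" "w ` T \<subseteq> {1..m}"
  shows "sum w T = (\<Sum>i=1..m. i * ty w T i)" and "card T = (\<Sum>i=1..m. ty w T i)"
proof -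
  have "sum w T = (\<Sum>i=1..m. sum w {c\<in>T. w c = i})"
    using sum.group[OF assms(1) _ assms(2), of w] by simp
  also have "\<dots> = (\<Sum>i=1..m. i * ty w T i)"
  proof (rule sum.cong[OF refl])
    fix i
    have "sum w {c\<in>T. w c = i} = sum (\<lambda>_. i) {c\<in>T. w c = i}" by (rule sum.cong) auto
    then show "sum w {c\<in>T. w c = i} = i * ty w T i" unfolding ty_def by simp
  qed
  finally show "sum w T = (\<Sum>i=1..m. i * ty w T i)" .
  have "card T = sum (\<lambda>_. 1) T" by simp
  also have "\<dots> = (\<Sum>i=1..m. sum (\<lambda>_. 1) {c\<in>T. w c = i})"
    using sum.group[OF assms(1) _ assms(2), of "\<lambda>_. (1::nat)"] by simp
  also have "\<dots> = (\<Sum>i=1..m. ty w T i)" unfolding ty_def by simp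
  finally show "card T = (\<Sum>i=1..m. ty w T i)" .
qed

lemma finite_partitions_mult: "finite (partitions_mult m)"
proof -
  let ?g = "\<lambda>f. \<lambda>i. if i \<in> {1..m} then f i else (0::nat)"
  have "partitions_mult m \<subseteq> ?g ` ({1..m} \<rightarrow>\<^sub>E {0..m})"
  proof
    fix a assume a: "a \<in> partitions_mult m"
    then have supp: "\<And>i. a i \<noteq> 0 \<Longrightarrow> 1 \<le> i \<and> i \<le> m" and s: "(\<Sum>i=1..m. i * a i) = m"
      unfolding partitions_mult_def by auto
    have le: "a i \<le> m" if "i \<in> {1..m}" for i
    proof -
      have "i * a i \<le> (\<Sum>i=1..m. i * a i)" by (rule member_le_sum) (use that in auto)
      moreover have "a i \<le> i * a i" using that by auto
      ultimately show ?thesis using s by linarith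
    qed
    have "a = ?g (restrict a {1..m})" using supp by (auto simp: fun_eq_iff)
    moreover have "restrict a {1..m} \<in> {1..m} \<rightarrow>\<^sub>E {0..m}" using le by auto
    ultimately show "a \<in> ?g ` ({1..m} \<rightarrow>\<^sub>E {0..m})" by blast
  qed
  moreover have "finite (?g ` ({1..m} \<rightarrow>\<^sub>E {0..m}))" by (intro finite_imageI finite_PiE) auto
  ultimately show ?thesis using finite_subset by blast
qed

lemma ty_supp:
  assumes "finite T" "c \<in> T"
  shows "ty w T (w c) \<noteq> 0"
proof -
  have "c \<in> {c'\<in>T. w c' = w c}" using assms by simp
  moreover have "finite {c'\<in>T. w c' = w c}" using assms by simp
  ultimately show ?thesis unfolding ty_def by (metis card_0_eq empty_iff)
qed

lemma card_type_class:
  fixes Ob :: "'c set"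
  assumes fin: "finite Ob" and asupp: "\<And>i. a i \<noteq> 0 \<Longrightarrow> i \<in> {1..m}"
  shows "card {T. T \<subseteq> Ob \<and> ty w T = a} = (\<Prod>i=1..m. card {c\<in>Ob. w c = i} choose a i)"
proof -
  let ?A = "{T. T \<subseteq> Ob \<and> ty w T = a}"
  let ?B = "PiE {1..m} (\<lambda>i. {U. U \<subseteq> {c\<in>Ob. w c = i} \<and> card U = a i})"
  let ?f = "\<lambda>T. restrict (\<lambda>i. {c\<in>T. w c = i}) {1..m}"
  have wT: "w c \<in> {1..m}" if "T \<in> ?A" "c \<in> T" for T c
  proof -
    have "finite T" using that fin finite_subset by auto
    then have "ty w T (w c) \<noteq> 0" using ty_supp that(2) by metis
    then show ?thesis using asupp that(1) by auto
  qed
  have rec: "T = (\<Union>i\<in>{1..m}. ?f T i)" if "T \<in> ?A" for T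
  proof
    show "T \<subseteq> (\<Union>i\<in>{1..m}. ?f T i)"
    proof
      fix c assume "c \<in> T"
      then have "w c \<in> {1..m}" "c \<in> ?f T (w c)" using wT[OF that] by auto
      then show "c \<in> (\<Union>i\<in>{1..m}. ?f T i)" by blast
    qed
    show "(\<Union>i\<in>{1..m}. ?f T i) \<subseteq> T" by auto
  qed
  have bij: "bij_betw ?f ?A ?B"
  proof (rule bij_betw_imageI)
    show "inj_on ?f ?A"
    proof (rule inj_onI)
      fix T T' assume "T \<in> ?A" "T' \<in> ?A" "?f T = ?f T'"
      then show "T = T'" using rec[of T] rec[of T'] by (metis (no_types, lifting))
    qed
    show "?f ` ?A = ?B"
    proof
      show "?f ` ?A \<subseteq> ?B"
      proof
        fix F assume "F \<in> ?f ` ?A"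
        then obtain T where T: "T \<in> ?A" "F = ?f T" by blast
        have ca: "card {c\<in>T. w c = i} = a i" for i using T(1) unfolding ty_def by (simp add: fun_eq_iff)
        have "?f T \<in> ?B"
        proof (rule PiE_I)
          fix i assume "i \<in> {1..m}"
          then show "?f T i \<in> {U. U \<subseteq> {c\<in>Ob. w c = i} \<and> card U = a i}"
            using ca[of i] T(1) by auto
        next
          fix i assume "i \<notin> {1..m}"
          then show "?f T i = undefined" by (simp only: restrict_def if_False)
        qed
        then show "F \<in> ?B" using T(2) by simp
      qed
      show "?B \<subseteq> ?f ` ?A"
      proof
        fix F assume F: "F \<in> ?B"
        define T where "T = (\<Union>i\<in>{1..m}. F i)"
        have Fi: "F i \<subseteq> {c\<in>Ob. w c = i} \<and> card (F i) = a i" if "i \<in> {1..m}" for i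
          using PiE_mem[OF F that] by simp
        have Fw: "w c = j \<and> c \<in> Ob" if "j \<in> {1..m}" "c \<in> F j" for j c
          using Fi[OF that(1)] that(2) by blast
        have inT: "c \<in> T \<longleftrightarrow> (\<exists>j\<in>{1..m}. c \<in> F j)" for c unfolding T_def by simp
        have sl: "{c\<in>T. w c = i} = (if i \<in> {1..m} then F i else {})" for i
        proof (cases "i \<in> {1..m}")
          case True
          have "{c\<in>T. w c = i} = F i"
          proof (rule set_eqI)
            fix c
            show "c \<in> {c\<in>T. w c = i} \<longleftrightarrow> c \<in> F i"
            proof
              assume "c \<in> {c\<in>T. w c = i}"
              then have "c \<in> T" "w c = i" by auto
              then obtain j where "j \<in> {1..m}" "c \<in> F j" using inT by blast
              moreover then have "j = i" using Fw \<open>w c = i\<close> by blast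
              ultimately show "c \<in> F i" by simp
            next
              assume "c \<in> F i"
              then have "c \<in> T" "w c = i" using inT True Fw by blast+
              then show "c \<in> {c\<in>T. w c = i}" by simp
            qed
          qed
          then show ?thesis by (simp only: True if_True)
        next
          case False
          have "{c\<in>T. w c = i} = {}"
          proof (rule set_eqI)
            fix c
            show "c \<in> {c\<in>T. w c = i} \<longleftrightarrow> c \<in> {}"
            proof
              assume "c \<in> {c\<in>T. w c = i}"
              then have "c \<in> T" "w c = i" by auto
              then obtain j where "j \<in> {1..m}" "c \<in> F j" using inT by blast
              moreover then have "j = i" using Fw \<open>w c = i\<close> by blast
              ultimately show "c \<in> {}" using False by simp
            qed simp
          qed
          then show ?thesis by (simp only: False if_False)
        qed
        have TO: "T \<subseteq> Ob"
        proof
          fix c assume "c \<in> T"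
          then obtain j where "j \<in> {1..m}" "c \<in> F j" using inT by blast
          then show "c \<in> Ob" using Fw by blast
        qed
        have "ty w T = a"
        proof
          fix i show "ty w T i = a i"
          proof (cases "i \<in> {1..m}")
            case True then show ?thesis unfolding ty_def using sl[of i] Fi[of i] by simp
          next
            case False
            then have "a i = 0" using asupp by blast
            moreover have E: "{c \<in> T. w c = i} = {}" using sl[of i] False by (simp only: if_False)
            ultimately show ?thesis unfolding ty_def E by simp
          qed
        qed
        then have "T \<in> ?A" using TO by simp
        moreover have fTF: "?f T = F"
        proof
          fix i show "?f T i = F i"
          proof (cases "i \<in> {1..m}")
            case True then show ?thesis using sl[of i] by simp
          next
            case False
            have "?f T i = undefined" using False by (simp only: restrict_def if_False)
            then show ?thesis using PiE_arb[OF F False] by simp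
          qed
        qed
        ultimately have "?f T \<in> ?f ` ?A" by (intro imageI)
        then show "F \<in> ?f ` ?A" by (simp only: fTF)
      qed
    qed
  qed
  have "card ?A = card ?B" using bij_betw_same_card[OF bij] .
  also have "\<dots> = (\<Prod>i=1..m. card {U. U \<subseteq> {c\<in>Ob. w c = i} \<and> card U = a i})"
    by (rule card_PiE) simp
  also have "\<dots> = (\<Prod>i=1..m. card {c\<in>Ob. w c = i} choose a i)"
    by (rule prod.cong[OF refl]) (rule n_subsets, use fin in simp)
  finally show ?thesis .
qed

lemma partition_count:
  fixes Ob :: "'c set" and w :: "'c \<Rightarrow> nat"
  assumes fin: "finite Ob" and pos: "\<And>c. c \<in> Ob \<Longrightarrow> w c \<ge> 1"
  shows "(\<Sum>T \<in> {T. T \<subseteq> Ob \<and> sum w T = m}. (-1::int) ^ (m - card T)) =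
    (\<Sum>a \<in> partitions_mult m. (-1) ^ (m - (\<Sum>i=1..m. a i)) *
        (\<Prod>i=1..m. int (card {c\<in>Ob. w c = i} choose a i)))"
proof -
  let ?TT = "{T. T \<subseteq> Ob \<and> sum w T = m}"
  have finTT: "finite ?TT"
  proof (rule finite_subset)
    show "?TT \<subseteq> Pow Ob" by blast
    show "finite (Pow Ob)" using fin by simp
  qed
  have wrange: "w ` T \<subseteq> {1..m}" if "T \<in> ?TT" for T
  proof
    fix x assume "x \<in> w ` T"
    then obtain c where c: "c \<in> T" "x = w c" by blast
    have fT: "finite T" using that fin finite_subset by auto
    have "w c \<le> sum w T" using member_le_sum[OF c(1), of w] fT by simp
    moreover have "w c \<ge> 1" using pos c(1) that by auto
    ultimately show "x \<in> {1..m}" using that c(2) by auto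
  qed
  have htyp: "ty w T \<in> partitions_mult m" if "T \<in> ?TT" for T
  proof -
    have fT: "finite T" using that fin finite_subset by auto
    have "ty w T i \<noteq> 0 \<longrightarrow> 1 \<le> i \<and> i \<le> m" for i
    proof
      assume "ty w T i \<noteq> 0"
      then have "{c\<in>T. w c = i} \<noteq> {}" unfolding ty_def by (metis card.empty)
      then obtain c where "c \<in> T" "w c = i" by blast
      then show "1 \<le> i \<and> i \<le> m" using wrange[OF that] by auto
    qed
    moreover have "(\<Sum>i=1..m. i * ty w T i) = m"
      using sum_by_weight(1)[OF fT wrange[OF that]] that by simp
    ultimately show ?thesis unfolding partitions_mult_def by blast
  qed
  have "(\<Sum>T \<in> ?TT. (-1::int) ^ (m - card T)) =
      (\<Sum>a \<in> partitions_mult m. \<Sum>T \<in> {T \<in> ?TT. ty w T = a}. (-1::int) ^ (m - card T))"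
  proof -
    have "ty w ` ?TT \<subseteq> partitions_mult m" using htyp by blast
    from sum.group[OF finTT finite_partitions_mult this, where h="\<lambda>T. (-1::int) ^ (m - card T)"]
    show ?thesis by simp
  qed
  also have "\<dots> = (\<Sum>a \<in> partitions_mult m. (-1) ^ (m - (\<Sum>i=1..m. a i)) *
        (\<Prod>i=1..m. int (card {c\<in>Ob. w c = i} choose a i)))"
  proof (rule sum.cong[OF refl])
    fix a assume a: "a \<in> partitions_mult m"
    then have asupp: "\<And>i. a i \<noteq> 0 \<Longrightarrow> i \<in> {1..m}" and asum: "(\<Sum>i=1..m. i * a i) = m"
      unfolding partitions_mult_def by auto
    have eqset: "{T \<in> ?TT. ty w T = a} = {T. T \<subseteq> Ob \<and> ty w T = a}"
    proof (rule set_eqI, rule iffI)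
      fix T assume "T \<in> {T \<in> ?TT. ty w T = a}"
      then show "T \<in> {T. T \<subseteq> Ob \<and> ty w T = a}" by simp
    next
      fix T assume T: "T \<in> {T. T \<subseteq> Ob \<and> ty w T = a}"
      have fT: "finite T" using T fin finite_subset by auto
      have "w ` T \<subseteq> {1..m}"
      proof
        fix x assume "x \<in> w ` T"
        then obtain c where c: "c \<in> T" "x = w c" by blast
        have "ty w T (w c) \<noteq> 0" using ty_supp[OF fT c(1)] .
        then show "x \<in> {1..m}" using asupp T c(2) by auto
      qed
      then have "sum w T = m" using sum_by_weight(1)[OF fT] T asum by simp
      then show "T \<in> {T \<in> ?TT. ty w T = a}" using T by simp
    qed
    have cardT: "card T = (\<Sum>i=1..m. a i)" if "T \<in> {T \<in> ?TT. ty w T = a}" for T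
    proof -
      have fT: "finite T" using that fin finite_subset by auto
      show ?thesis using sum_by_weight(2)[OF fT wrange] that by auto
    qed
    have "(\<Sum>T \<in> {T \<in> ?TT. ty w T = a}. (-1::int) ^ (m - card T)) =
        (\<Sum>T \<in> {T \<in> ?TT. ty w T = a}. (-1::int) ^ (m - (\<Sum>i=1..m. a i)))"
      by (rule sum.cong[OF refl]) (simp only: cardT)
    also have "\<dots> = int (card {T \<in> ?TT. ty w T = a}) * (-1::int) ^ (m - (\<Sum>i=1..m. a i))"
      by simp
    also have "card {T \<in> ?TT. ty w T = a} = (\<Prod>i=1..m. card {c\<in>Ob. w c = i} choose a i)"
      unfolding eqset using card_type_class[OF fin asupp] by blast
    finally show "(\<Sum>T \<in> {T \<in> ?TT. ty w T = a}. (-1::int) ^ (m - card T)) =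
        (-1) ^ (m - (\<Sum>i=1..m. a i)) * (\<Prod>i=1..m. int (card {c\<in>Ob. w c = i} choose a i))"
      by (simp add: of_nat_prod mult.commute)
  qed
  finally show ?thesis .
qed

lemma mset4_decomp:
  fixes M :: "(nat \<times> nat) multiset"
  assumes "set_mset M \<subseteq> {(0,0),(1,0),(0,1),(1,1)}"
  shows "M = replicate_mset (count M (0,0)) (0,0) + replicate_mset (count M (1,0)) (1,0)
           + replicate_mset (count M (0,1)) (0,1) + replicate_mset (count M (1,1)) (1,1)"
proof (rule multiset_eqI)
  fix x :: "nat \<times> nat"
  show "count M x = count (replicate_mset (count M (0,0)) (0,0) + replicate_mset (count M (1,0)) (1,0)
           + replicate_mset (count M (0,1)) (0,1) + replicate_mset (count M (1,1)) (1,1)) x"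
  proof (cases "x \<in> {(0,0),(1,0),(0,1),(1,1)}")
    case True then show ?thesis by auto
  next
    case False
    then have "x \<notin># M" using assms by blast
    then have "count M x = 0" by (simp add: not_in_iff)
    then show ?thesis using False by auto
  qed
qed

definition mk4 :: "nat \<Rightarrow> nat \<Rightarrow> nat \<Rightarrow> nat \<Rightarrow> (nat \<times> nat) multiset" where
  "mk4 w x y z = replicate_mset w (0,0) + replicate_mset x (1,0) + replicate_mset y (0,1) + replicate_mset z (1,1)"

lemma mk4_props:
  "size (mk4 w x y z) = w + x + y + z"
  "sum_mset (image_mset fst (mk4 w x y z)) = x + z"
  "sum_mset (image_mset snd (mk4 w x y z)) = y + z"
  "count (mk4 w x y z) (0,0) = w"
  "count (mk4 w x y z) (1,1) = z"
  "count (mk4 w x y z) (1,0) = x"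
  "count (mk4 w x y z) (0,1) = y"
  "set_mset (mk4 w x y z) \<subseteq> {(0,0),(1,0),(0,1),(1,1)}"
  unfolding mk4_def by auto

lemma qstar_formula:
  "qstar n a b = card {z::nat. z \<le> 1 \<and> z \<le> a \<and> z \<le> b \<and> a + b \<le> n + z \<and> n + z \<le> a + b + 1}"
proof -
  let ?Q = "{M :: (nat \<times> nat) multiset.
      set_mset M \<subseteq> {(0,0),(1,0),(0,1),(1,1)} \<and> size M = n \<and>
      count M (0,0) \<le> 1 \<and> count M (1,1) \<le> 1 \<and>
      sum_mset (image_mset fst M) = a \<and> sum_mset (image_mset snd M) = b}"
  let ?Z = "{z::nat. z \<le> 1 \<and> z \<le> a \<and> z \<le> b \<and> a + b \<le> n + z \<and> n + z \<le> a + b + 1}"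
  have bij: "bij_betw (\<lambda>M. count M (1,1)) ?Q ?Z"
  proof (rule bij_betw_byWitness[where f'="\<lambda>z. mk4 (n + z - a - b) (a - z) (b - z) z"])
    show "\<forall>M\<in>?Q. mk4 (n + count M (1,1) - a - b) (a - count M (1,1)) (b - count M (1,1)) (count M (1,1)) = M"
    proof
      fix M assume M: "M \<in> ?Q"
      then have sM: "set_mset M \<subseteq> {(0,0),(1,0),(0,1),(1,1)}" by blast
      define w where "w = count M (0,0)"
      define x where "x = count M (1,0)"
      define y where "y = count M (0,1)"
      define z where "z = count M (1,1)"
      have e: "M = mk4 w x y z"
        using mset4_decomp[OF sM] unfolding mk4_def w_def x_def y_def z_def .
      have Mp: "size M = n" "sum_mset (image_mset fst M) = a" "sum_mset (image_mset snd M) = b"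
        "count M (0,0) \<le> 1" "count M (1,1) \<le> 1" using M by auto
      have p0: "w + x + y + z = n" "x + z = a" "y + z = b" "w \<le> 1" "z \<le> 1"
        using Mp unfolding e mk4_props by auto
      have p: "count M (0,0) + count M (1,0) + count M (0,1) + count M (1,1) = n"
        "count M (1,0) + count M (1,1) = a" "count M (0,1) + count M (1,1) = b"
        using p0 unfolding w_def x_def y_def z_def by auto
      have "n + count M (1,1) - a - b = count M (0,0)" "a - count M (1,1) = count M (1,0)"
        "b - count M (1,1) = count M (0,1)" using p by auto
      then show "mk4 (n + count M (1,1) - a - b) (a - count M (1,1)) (b - count M (1,1)) (count M (1,1)) = M"
        using e unfolding w_def x_def y_def z_def by simp
    qed
    show "\<forall>z\<in>?Z. count (mk4 (n + z - a - b) (a - z) (b - z) z) (1,1) = z"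
      using mk4_props(5) by blast
    show "(\<lambda>M. count M (1,1)) ` ?Q \<subseteq> ?Z"
    proof
      fix zz assume "zz \<in> (\<lambda>M. count M (1,1)) ` ?Q"
      then obtain M where M: "M \<in> ?Q" "zz = count M (1,1)" by blast
      then have sM: "set_mset M \<subseteq> {(0,0),(1,0),(0,1),(1,1)}" by blast
      define w where "w = count M (0,0)"
      define x where "x = count M (1,0)"
      define y where "y = count M (0,1)"
      define z where "z = count M (1,1)"
      have e: "M = mk4 w x y z"
        using mset4_decomp[OF sM] unfolding mk4_def w_def x_def y_def z_def .
      have Mp: "size M = n" "sum_mset (image_mset fst M) = a" "sum_mset (image_mset snd M) = b"
        "count M (0,0) \<le> 1" "count M (1,1) \<le> 1" using M by auto
      have p0: "w + x + y + z = n" "x + z = a" "y + z = b" "w \<le> 1" "z \<le> 1"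
        using Mp unfolding e mk4_props by auto
      have p: "count M (0,0) + count M (1,0) + count M (0,1) + count M (1,1) = n"
        "count M (1,0) + count M (1,1) = a" "count M (0,1) + count M (1,1) = b"
        using p0 unfolding w_def x_def y_def z_def by auto
      have "count M (0,0) \<le> 1" "count M (1,1) \<le> 1" using Mp by auto
      then show "zz \<in> ?Z" using p M(2) by auto
    qed
    show "(\<lambda>z. mk4 (n + z - a - b) (a - z) (b - z) z) ` ?Z \<subseteq> ?Q"
    proof
      fix M assume "M \<in> (\<lambda>z. mk4 (n + z - a - b) (a - z) (b - z) z) ` ?Z"
      then obtain z where z: "z \<in> ?Z" "M = mk4 (n + z - a - b) (a - z) (b - z) z" by blast
      have zz: "z \<le> 1" "z \<le> a" "z \<le> b" "a + b \<le> n + z" "n + z \<le> a + b + 1" using z(1) by auto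
      have ar: "n + z - a - b \<le> 1" "n + z - a - b + (a - z) + (b - z) + z = n" "a - z + z = a" "b - z + z = b"
        using zz by arith+
      have "set_mset M \<subseteq> {(0,0),(1,0),(0,1),(1,1)}" unfolding z(2) by (rule mk4_props(8))
      moreover have "size M = n" unfolding z(2) mk4_props(1) using ar(2) .
      moreover have "count M (0,0) \<le> 1" unfolding z(2) mk4_props(4) using ar(1) .
      moreover have "count M (1,1) \<le> 1" unfolding z(2) mk4_props(5) using zz(1) .
      moreover have "sum_mset (image_mset fst M) = a" unfolding z(2) mk4_props(2) using ar(3) .
      moreover have "sum_mset (image_mset snd M) = b" unfolding z(2) mk4_props(3) using ar(4) .
      ultimately show "M \<in> ?Q" by blast
    qed
  qed
  show ?thesis unfolding qstar_def using bij_betw_same_card[OF bij] .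
qed

lemma term_identity:
  fixes n a b d :: nat
  assumes "d \<le> 1" "d \<le> b"
  shows "(n choose a) * ((if n \<le> a + b - d + 1 then fact (a - d) * fact (b - d) else 0) * ((a choose d) * ((n - a) choose (b - d))))
       = fact n * (if d \<le> a \<and> a + b \<le> n + d \<and> n + d \<le> a + b + 1 then 1 else 0)"
proof (cases "a \<le> n \<and> d \<le> a \<and> b - d \<le> n - a")
  case False
  then have z: "(n choose a) * ((a choose d) * ((n - a) choose (b - d))) = 0" by auto
  have "\<not> (d \<le> a \<and> a + b \<le> n + d \<and> n + d \<le> a + b + 1)" using False assms by auto
  moreover have "(n choose a) * (Y * ((a choose d) * ((n - a) choose (b - d)))) =
      Y * ((n choose a) * ((a choose d) * ((n - a) choose (b - d))))" for Y :: nat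
    by (simp only: mult.left_commute)
  ultimately show ?thesis using z by (simp only: mult_0_right if_False)
next
  case True
  then have h: "a \<le> n" "d \<le> a" "b - d \<le> n - a" by auto
  have le: "a + b \<le> n + d" using h assms by arith
  show ?thesis
  proof (cases "n \<le> a + b - d + 1")
    case False
    then have "\<not> (n + d \<le> a + b + 1)" using assms by arith
    then show ?thesis using False by simp
  next
    case c: True
    have c': "n + d \<le> a + b + 1" using c assms by arith
    have fd: "fact d = (1::nat)" using assms(1) by (cases d) auto
    have r: "n - a - (b - d) \<le> 1" using c assms by arith
    have fr: "fact (n - a - (b - d)) = (1::nat)" using r by (cases "n - a - (b - d)") auto
    have e1: "fact (a - d) * (a choose d) = fact a"
      using binomial_fact_lemma[OF h(2)] fd by (simp add: ac_simps)
    have e2: "fact (b - d) * ((n - a) choose (b - d)) = fact (n - a)"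
      using binomial_fact_lemma[OF h(3)] fr by (simp add: ac_simps)
    have e3: "fact a * fact (n - a) * (n choose a) = fact n" using binomial_fact_lemma[OF h(1)] .
    have "(n choose a) * ((fact (a - d) * fact (b - d)) * ((a choose d) * ((n - a) choose (b - d))))
        = (fact (a - d) * (a choose d)) * (fact (b - d) * ((n - a) choose (b - d))) * (n choose a)"
      by (simp add: ac_simps)
    also have "\<dots> = fact n" using e1 e2 e3 by simp
    finally show ?thesis using c c' h le by simp
  qed
qed



lemma sR_union:
  assumes "finite S" "p permutes S" "X \<subseteq> S" "Y \<subseteq> S" "X \<inter> Y = {}" "p ` X = X" "p ` Y = Y"
  shows "sR p (X \<union> Y) = sR p X * sR p Y"
proof -
  have pX: "perm_restrict p X permutes X" using PR_permutes[OF assms(2,6)] .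
  have pY: "perm_restrict p Y permutes Y" using PR_permutes[OF assms(2,7)] .
  have fX: "finite X" "finite Y" using assms finite_subset by auto
  have "perm_restrict p X \<circ> perm_restrict p Y = perm_restrict p (X \<union> Y)"
    by (rule perm_restrict_union[OF pX pY assms(5)])
  then have "sR p (X \<union> Y) = sign (perm_restrict p X \<circ> perm_restrict p Y)" unfolding sR_def by simp
  also have "\<dots> = sR p X * sR p Y" unfolding sR_def
    by (rule sign_compose) (use pX pY fX permutation_permutes in blast)+
  finally show ?thesis .
qed

lemma sR_sq: "sR p X * sR p X = 1" unfolding sR_def by simp

lemma sR_full: "p permutes S \<Longrightarrow> sR p S = sign p"
  unfolding sR_def by simp

definition Stab :: "'a set \<Rightarrow> 'a set \<Rightarrow> 'a set \<Rightarrow> ('a \<Rightarrow> 'a) set" where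
  "Stab S A B = {p. p permutes S \<and> p ` A = A \<and> p ` B = B}"

lemma stab_regions:
  assumes "p permutes S" "p ` A = A" "p ` B = B" "A \<subseteq> S" "B \<subseteq> S"
  shows "p ` (A \<inter> B) = A \<inter> B" "p ` (A - B) = A - B" "p ` (B - A) = B - A"
    "p ` (S - (A \<union> B)) = S - (A \<union> B)"
proof -
  have inj: "inj p" using permutes_inj[OF assms(1)] .
  have pS: "p ` S = S" using permutes_image[OF assms(1)] .
  show "p ` (A \<inter> B) = A \<inter> B" using image_Int[OF inj] assms by simp
  show "p ` (A - B) = A - B" using image_set_diff[OF inj] assms by simp
  show "p ` (B - A) = B - A" using image_set_diff[OF inj] assms by simp
  show "p ` (S - (A \<union> B)) = S - (A \<union> B)" using image_set_diff[OF inj] image_Un pS assms by metis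
qed

lemma weight_identity:
  assumes "finite S" "p \<in> Stab S A B" "A \<subseteq> S" "B \<subseteq> S"
  shows "sign p * sR p A * sR p B = sR p (A \<inter> B) * sR p (S - (A \<union> B))"
proof -
  have p: "p permutes S" "p ` A = A" "p ` B = B" using assms(2) unfolding Stab_def by auto
  note R = stab_regions[OF p assms(3,4)]
  let ?P = "A \<inter> B" and ?U = "A - B" and ?V = "B - A" and ?R = "S - (A \<union> B)"
  have eA: "A = ?P \<union> ?U" by blast
  have eB: "B = ?P \<union> ?V" by blast
  have eS: "S = (?P \<union> ?U) \<union> (?V \<union> ?R)" using assms by blast
  have sA: "sR p A = sR p ?P * sR p ?U"
    by (subst eA, rule sR_union[OF assms(1) p(1)]) (use assms R in auto)
  have sB: "sR p B = sR p ?P * sR p ?V"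
    by (subst eB, rule sR_union[OF assms(1) p(1)]) (use assms R in auto)
  have sVR: "sR p (?V \<union> ?R) = sR p ?V * sR p ?R"
    by (rule sR_union[OF assms(1) p(1)]) (use assms R in auto)
  have imVR: "p ` (?V \<union> ?R) = ?V \<union> ?R" using R by (simp add: image_Un)
  have imPU: "p ` (?P \<union> ?U) = ?P \<union> ?U" using R by (simp add: image_Un)
  have sS: "sR p S = sR p (?P \<union> ?U) * sR p (?V \<union> ?R)"
    by (subst eS, rule sR_union[OF assms(1) p(1)]) (use assms imVR imPU in auto)
  have "sign p = sR p ?P * sR p ?U * (sR p ?V * sR p ?R)"
    using sR_full[OF p(1)] sS sA[symmetric] eA sVR by simp
  then have "sign p * sR p A * sR p B =
      (sR p ?P * sR p ?P) * (sR p ?U * sR p ?U) * (sR p ?V * sR p ?V) * sR p ?P * sR p ?R"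
    using sA sB by (simp add: algebra_simps)
  then show ?thesis by (simp only: sR_sq mult_1_left)
qed

lemma perm_restrict_transpose:
  assumes "x \<in> Q" "y \<in> Q"
  shows "perm_restrict (p \<circ> transpose x y) Q = perm_restrict p Q \<circ> transpose x y"
proof
  fix z show "perm_restrict (p \<circ> transpose x y) Q z = (perm_restrict p Q \<circ> transpose x y) z"
  proof (cases "z \<in> Q")
    case True
    have "transpose x y z \<in> Q" using True assms by (auto simp: transpose_def)
    then show ?thesis using True by (simp add: perm_restrict_simps)
  next
    case False
    then have "transpose x y z = z" using assms by (auto simp: transpose_def)
    then show ?thesis using False by (simp add: perm_restrict_simps)
  qed
qed

lemma perm_restrict_transpose_out:
  assumes "x \<notin> Q" "y \<notin> Q"
  shows "perm_restrict (p \<circ> transpose x y) Q = perm_restrict p Q"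
proof
  fix z show "perm_restrict (p \<circ> transpose x y) Q z = perm_restrict p Q z"
  proof (cases "z \<in> Q")
    case True
    then have "transpose x y z = z" using assms by (auto simp: transpose_def)
    then show ?thesis using True by (simp add: perm_restrict_simps)
  next
    case False
    then show ?thesis by (simp add: perm_restrict_simps)
  qed
qed

lemma sR_flip:
  assumes "finite S" "p permutes S" "Q \<subseteq> S" "p ` Q = Q" "x \<in> Q" "y \<in> Q" "x \<noteq> y"
  shows "sR (p \<circ> transpose x y) Q = - sR p Q"
proof -
  have pq: "perm_restrict p Q permutes Q" using PR_permutes[OF assms(2,4)] .
  have fQ: "finite Q" using assms finite_subset by auto
  have "sR (p \<circ> transpose x y) Q = sign (perm_restrict p Q \<circ> transpose x y)"
    unfolding sR_def using perm_restrict_transpose[OF assms(5,6)] by simp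
  also have "\<dots> = sR p Q * sign (transpose x y)"
  proof -
    have "permutation (perm_restrict p Q)" unfolding permutation_permutes using pq fQ by blast
    from sign_compose[OF this permutation_swap_id] show ?thesis unfolding sR_def .
  qed
  also have "\<dots> = - sR p Q" using assms(7) by (simp add: sign_swap_id)
  finally show ?thesis .
qed

lemma sum_vanish_involution:
  fixes f :: "'b \<Rightarrow> int"
  assumes "\<And>s. s \<in> St \<Longrightarrow> h s \<in> St" "\<And>s. s \<in> St \<Longrightarrow> h (h s) = s"
    "\<And>s. s \<in> St \<Longrightarrow> f (h s) = - f s"
  shows "sum f St = 0"
proof -
  have bij: "bij_betw h St St"
  proof (rule bij_betw_byWitness[where f'=h])
    show "\<forall>a\<in>St. h (h a) = a" using assms(2) by blast
    show "\<forall>a\<in>St. h (h a) = a" using assms(2) by blast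
    show "h ` St \<subseteq> St" using assms(1) by blast
    show "h ` St \<subseteq> St" using assms(1) by blast
  qed
  have "sum f St = sum (f \<circ> h) St" using sum.reindex_bij_betw[OF bij, of f] by simp
  also have "\<dots> = - sum f St" using assms(3) by (simp add: sum_negf)
  finally show ?thesis by simp
qed

lemma Stab_transpose:
  assumes "p \<in> Stab S A B" "x \<in> S" "y \<in> S" "x \<in> A \<longleftrightarrow> y \<in> A" "x \<in> B \<longleftrightarrow> y \<in> B"
  shows "p \<circ> transpose x y \<in> Stab S A B"
proof -
  have p: "p permutes S" "p ` A = A" "p ` B = B" using assms(1) unfolding Stab_def by auto
  have "p \<circ> transpose x y permutes S" using permutes_compose[OF permutes_swap_id[OF assms(2,3)] p(1)] .
  moreover have "(p \<circ> transpose x y) ` A = A"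
    by (simp only: image_comp[symmetric] transpose_image_eq[OF assms(4)] p(2))
  moreover have "(p \<circ> transpose x y) ` B = B"
    by (simp only: image_comp[symmetric] transpose_image_eq[OF assms(5)] p(3))
  ultimately show ?thesis unfolding Stab_def by blast
qed

lemma H_vanish:
  assumes "finite S" "A \<subseteq> S" "B \<subseteq> S" "\<not> (card (A \<inter> B) \<le> 1 \<and> card (S - (A \<union> B)) \<le> 1)"
  shows "(\<Sum>p\<in>Stab S A B. sR p (A \<inter> B) * sR p (S - (A \<union> B))) = 0"
proof -
  let ?P = "A \<inter> B" and ?R = "S - (A \<union> B)"
  have fin: "finite ?P" "finite ?R" using assms(1,2) finite_subset[of "A \<inter> B" S] by auto
  have "\<exists>Q Q'. (Q = ?P \<and> Q' = ?R \<or> Q = ?R \<and> Q' = ?P) \<and> \<not> card Q \<le> 1"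
    using assms(4) by blast
  then obtain Q Q' where QQ: "Q = ?P \<and> Q' = ?R \<or> Q = ?R \<and> Q' = ?P" "\<not> card Q \<le> 1" by blast
  have fQ: "finite Q" using QQ fin by auto
  obtain x y where xy: "x \<in> Q" "y \<in> Q" "x \<noteq> y"
    using QQ(2) card_le_Suc0_iff_eq[OF fQ] by auto
  have QS: "Q \<subseteq> S" "Q' \<subseteq> S" using QQ assms by auto
  have disj: "x \<notin> Q'" "y \<notin> Q'" using QQ xy by auto
  have xyS: "x \<in> S" "y \<in> S" using xy QS by auto
  have xyAB: "x \<in> A \<longleftrightarrow> y \<in> A" "x \<in> B \<longleftrightarrow> y \<in> B" using QQ xy by auto
  let ?h = "\<lambda>p. p \<circ> transpose x y"
  let ?f = "\<lambda>p. sR p Q * sR p Q'"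
  have "(\<Sum>p\<in>Stab S A B. sR p (A \<inter> B) * sR p (S - (A \<union> B))) = sum ?f (Stab S A B)"
    by (rule sum.cong[OF refl]) (use QQ in auto)
  also have "\<dots> = 0"
  proof (rule sum_vanish_involution[where h="?h"])
    fix p assume p: "p \<in> Stab S A B"
    show "?h p \<in> Stab S A B" using Stab_transpose[OF p xyS xyAB] .
    show "?h (?h p) = p" by (simp add: comp_assoc)
    have pp: "p permutes S" "p ` A = A" "p ` B = B" using p unfolding Stab_def by auto
    have "p ` Q = Q" using QQ stab_regions[OF pp assms(2,3)] by auto
    then have "sR (?h p) Q = - sR p Q" using sR_flip[OF assms(1) pp(1) QS(1) _ xy] by blast
    moreover have "sR (?h p) Q' = sR p Q'"
      unfolding sR_def using perm_restrict_transpose_out[OF disj] by simp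
    ultimately show "?f (?h p) = - ?f p" by simp
  qed
  finally show ?thesis .
qed

lemma perm_small:
  assumes "finite Q" "card Q \<le> 1" "q permutes Q"
  shows "q = id"
proof (cases "Q = {}")
  case True then show ?thesis using assms(3) by simp
next
  case False
  then obtain x where x: "x \<in> Q" by blast
  have "\<forall>a1\<in>Q. \<forall>a2\<in>Q. a1 = a2" using card_le_Suc0_iff_eq[OF assms(1)] assms(2) by simp
  then have "Q = {x}" using x by blast
  then show ?thesis using assms(3) by simp
qed

lemma small_fixed:
  assumes "finite Q" "card Q \<le> 1" "p ` Q = Q" "z \<in> Q"
  shows "p z = z"
proof -
  have "p z \<in> Q" using assms(3,4) by blast
  then show ?thesis using card_le_Suc0_iff_eq[OF assms(1)] assms(2,4) by simp
qed

lemma perm_image_stable: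
  assumes "q permutes U" "U \<subseteq> A \<or> U \<inter> A = {}"
  shows "q ` A = A"
proof -
  have e: "A = (A \<inter> U) \<union> (A - U)" by blast
  have 1: "q ` (A - U) = A - U"
  proof -
    have "\<And>z. z \<in> A - U \<Longrightarrow> q z = z" using permutes_not_in[OF assms(1)] by blast
    then show ?thesis by simp
  qed
  have 2: "q ` (A \<inter> U) = A \<inter> U"
    using assms(2) permutes_image[OF assms(1)] by (metis Int_absorb1 Int_commute image_empty)
  have "q ` A = q ` (A \<inter> U) \<union> q ` (A - U)" by (subst e) (rule image_Un)
  also have "\<dots> = A" using 1 2 by blast
  finally show ?thesis .
qed

lemma card_Stab_good:
  assumes "finite S" "A \<subseteq> S" "B \<subseteq> S" "card (A \<inter> B) \<le> 1" "card (S - (A \<union> B)) \<le> 1"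
  shows "card (Stab S A B) = fact (card (A - B)) * fact (card (B - A))"
proof -
  let ?P = "A \<inter> B" and ?U = "A - B" and ?V = "B - A" and ?R = "S - (A \<union> B)"
  have fU: "finite ?U" "finite ?V" "finite ?P" "finite ?R" using assms(1,2,3) finite_subset[of _ S] by auto
  let ?f = "\<lambda>(q, r). q \<circ> r"
  let ?D = "{q. q permutes ?U} \<times> {r. r permutes ?V}"
  have bij: "bij_betw ?f ?D (Stab S A B)"
  proof (rule bij_betw_imageI)
    show "inj_on ?f ?D"
    proof (rule inj_onI)
      fix x1 x2 assume x1: "x1 \<in> ?D" and x2: "x2 \<in> ?D" and eq: "?f x1 = ?f x2"
      obtain q r where qr: "x1 = (q, r)" "q permutes ?U" "r permutes ?V" using x1 by blast
      obtain q' r' where qr': "x2 = (q', r')" "q' permutes ?U" "r' permutes ?V" using x2 by blast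
      have e: "q (r z) = q' (r' z)" for z using eq qr qr' by (simp add: fun_eq_iff)
      have "q z = q' z" for z
      proof (cases "z \<in> ?U")
        case True
        then have "r z = z" "r' z = z" using permutes_not_in[OF qr(3)] permutes_not_in[OF qr'(3)] by auto
        then show ?thesis using e[of z] by simp
      next
        case False
        then show ?thesis using permutes_not_in[OF qr(2)] permutes_not_in[OF qr'(2)] by simp
      qed
      moreover have "r z = r' z" for z
      proof (cases "z \<in> ?V")
        case True
        then have "r z \<in> ?V" "r' z \<in> ?V" using permutes_in_image[OF qr(3)] permutes_in_image[OF qr'(3)] by auto
        then have "q (r z) = r z" "q' (r' z) = r' z"
          using permutes_not_in[OF qr(2)] permutes_not_in[OF qr'(2)] by auto
        then show ?thesis using e[of z] by simp
      next
        case False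
        then show ?thesis using permutes_not_in[OF qr(3)] permutes_not_in[OF qr'(3)] by simp
      qed
      ultimately show "x1 = x2" using qr(1) qr'(1) by (simp add: fun_eq_iff)
    qed
    show "?f ` ?D = Stab S A B"
    proof
      show "?f ` ?D \<subseteq> Stab S A B"
      proof
        fix p assume "p \<in> ?f ` ?D"
        then obtain x where x: "x \<in> ?D" "p = ?f x" by blast
        then obtain q r where qr: "p = q \<circ> r" "q permutes ?U" "r permutes ?V"
          by (cases x) auto
        have qS: "q permutes S" using permutes_subset[OF qr(2)] assms(2) by blast
        have rS: "r permutes S" using permutes_subset[OF qr(3)] assms(3) by blast
        have "p permutes S" using permutes_compose[OF rS qS] qr(1) by simp
        moreover have "p ` A = A"
        proof -
          have "r ` A = A" using perm_image_stable[OF qr(3)] by blast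
          moreover have "q ` A = A" using perm_image_stable[OF qr(2)] by blast
          ultimately show ?thesis by (simp only: qr(1) image_comp[symmetric])
        qed
        moreover have "p ` B = B"
        proof -
          have "r ` B = B" using perm_image_stable[OF qr(3)] by blast
          moreover have "q ` B = B" using perm_image_stable[OF qr(2)] by blast
          ultimately show ?thesis by (simp only: qr(1) image_comp[symmetric])
        qed
        ultimately show "p \<in> Stab S A B" unfolding Stab_def by blast
      qed
      show "Stab S A B \<subseteq> ?f ` ?D"
      proof
        fix p assume p: "p \<in> Stab S A B"
        have pp: "p permutes S" "p ` A = A" "p ` B = B" using p unfolding Stab_def by auto
        note R = stab_regions[OF pp assms(2,3)]
        let ?q = "perm_restrict p ?U" and ?r = "perm_restrict p ?V"
        have q: "?q permutes ?U" using PR_permutes[OF pp(1) R(2)] .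
        have r: "?r permutes ?V" using PR_permutes[OF pp(1) R(3)] .
        have "p = ?q \<circ> ?r"
        proof
          fix z show "p z = (?q \<circ> ?r) z"
          proof -
            consider "z \<in> ?V" | "z \<in> ?U" | "z \<in> ?P" | "z \<in> ?R" | "z \<notin> S" using assms(2,3) by blast
            then show ?thesis
            proof cases
              case 1
              then have "p z \<in> ?V" using R(3) by blast
              then show ?thesis using 1 by (simp add: perm_restrict_simps)
            next
              case 2 then show ?thesis by (simp add: perm_restrict_simps)
            next
              case 3
              then have "p z = z" using small_fixed[OF fU(3) assms(4) R(1)] by blast
              then show ?thesis using 3 by (simp add: perm_restrict_simps)
            next
              case 4
              then have "p z = z" using small_fixed[OF fU(4) assms(5) R(4)] by blast
              then show ?thesis using 4 by (simp add: perm_restrict_simps)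
            next
              case 5
              then have "p z = z" using permutes_not_in[OF pp(1)] by blast
              moreover have "z \<notin> ?U" "z \<notin> ?V" using 5 assms(2,3) by auto
              ultimately show ?thesis by (simp add: perm_restrict_simps)
            qed
          qed
        qed
        moreover have "(?q, ?r) \<in> ?D" using q r by blast
        ultimately show "p \<in> ?f ` ?D" by (metis (no_types, lifting) case_prod_conv image_eqI)
      qed
    qed
  qed
  have "card (Stab S A B) = card ?D" using bij_betw_same_card[OF bij] by simp
  also have "\<dots> = fact (card ?U) * fact (card ?V)"
    by (simp add: card_cartesian_product card_permutations fU)
  finally show ?thesis .
qed

lemma H_good:
  assumes "finite S" "A \<subseteq> S" "B \<subseteq> S" "card (A \<inter> B) \<le> 1" "card (S - (A \<union> B)) \<le> 1"
  shows "(\<Sum>p\<in>Stab S A B. sR p (A \<inter> B) * sR p (S - (A \<union> B))) = int (fact (card (A - B)) * fact (card (B - A)))"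
proof -
  have fP: "finite (A \<inter> B)" "finite (S - (A \<union> B))" using assms(1,2) finite_subset[of "A \<inter> B" S] by auto
  have "sR p (A \<inter> B) * sR p (S - (A \<union> B)) = 1" if p: "p \<in> Stab S A B" for p
  proof -
    have pp: "p permutes S" "p ` A = A" "p ` B = B" using p unfolding Stab_def by auto
    note R = stab_regions[OF pp assms(2,3)]
    have "perm_restrict p (A \<inter> B) = id" using perm_small[OF fP(1) assms(4) PR_permutes[OF pp(1) R(1)]] .
    moreover have "perm_restrict p (S - (A \<union> B)) = id" using perm_small[OF fP(2) assms(5) PR_permutes[OF pp(1) R(4)]] .
    ultimately show ?thesis unfolding sR_def by simp
  qed
  then have "(\<Sum>p\<in>Stab S A B. sR p (A \<inter> B) * sR p (S - (A \<union> B))) = (\<Sum>p\<in>Stab S A B. 1)"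
    by (rule sum.cong[OF refl])
  also have "\<dots> = int (card (Stab S A B))" by simp
  finally show ?thesis using card_Stab_good[OF assms] by simp
qed

lemma card_B_given_meet:
  assumes "finite S" "A \<subseteq> S" "d \<le> b"
  shows "card {B. (B \<subseteq> S \<and> card B = b) \<and> card (A \<inter> B) = d} = (card A choose d) * ((card S - card A) choose (b - d))"
proof -
  let ?X = "{B. (B \<subseteq> S \<and> card B = b) \<and> card (A \<inter> B) = d}"
  let ?Y = "{C. C \<subseteq> A \<and> card C = d} \<times> {D. D \<subseteq> S - A \<and> card D = b - d}"
  let ?f = "\<lambda>B. (A \<inter> B, B - A)"
  have fA: "finite A" using assms finite_subset by blast
  have bij: "bij_betw ?f ?X ?Y"
  proof (rule bij_betw_byWitness[where f'="\<lambda>(C, D). C \<union> D"])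
    show "\<forall>B\<in>?X. (\<lambda>(C, D). C \<union> D) (?f B) = B"
    proof
      fix B show "(\<lambda>(C, D). C \<union> D) (?f B) = B" by (simp only: case_prod_conv) blast
    qed
    show "\<forall>y\<in>?Y. ?f ((\<lambda>(C, D). C \<union> D) y) = y"
    proof
      fix y assume "y \<in> ?Y"
      then obtain C D where CD: "y = (C, D)" "C \<subseteq> A" "D \<subseteq> S - A" by blast
      have "A \<inter> (C \<union> D) = C" "(C \<union> D) - A = D" using CD(2,3) by blast+
      then show "?f ((\<lambda>(C, D). C \<union> D) y) = y" using CD(1) by simp
    qed
    show "?f ` ?X \<subseteq> ?Y"
    proof
      fix y assume "y \<in> ?f ` ?X"
      then obtain B where B0: "B \<in> ?X" "y = ?f B" by blast
      then have B: "B \<subseteq> S" "card B = b" "card (A \<inter> B) = d" by auto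
      have fB: "finite B" using B(1) assms(1) finite_subset by blast
      have "finite (B \<inter> A)" using fB by simp
      then have "card (B - A) = card B - card (B \<inter> A)" by (rule card_Diff_subset_Int)
      then have cBA: "card (B - A) = b - d" using B(2,3) by (simp add: Int_commute)
      have "A \<inter> B \<in> {C. C \<subseteq> A \<and> card C = d}" using B(3) by blast
      moreover have "B - A \<in> {D. D \<subseteq> S - A \<and> card D = b - d}" using B(1) cBA by blast
      ultimately show "y \<in> ?Y" using B0(2) by simp
    qed
    show "(\<lambda>(C, D). C \<union> D) ` ?Y \<subseteq> ?X"
    proof
      fix B assume "B \<in> (\<lambda>(C, D). C \<union> D) ` ?Y"
      then obtain y where y: "y \<in> ?Y" "B = (\<lambda>(C, D). C \<union> D) y" by blast
      then obtain C D where CD0: "y = (C, D)" by (cases y) blast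
      have CD: "C \<subseteq> A" "card C = d" "D \<subseteq> S - A" "card D = b - d" "B = C \<union> D"
        using y CD0 by auto
      have fC: "finite C" using CD(1) fA finite_subset by blast
      have fD: "finite D" using CD(3) assms(1) finite_subset by blast
      have disj: "C \<inter> D = {}" using CD(1,3) by blast
      have "card B = card C + card D" using card_Un_disjoint[OF fC fD disj] CD(5) by simp
      then have "card B = b" using CD(2,4) assms(3) by simp
      moreover have "A \<inter> B = C" using CD(1,3,5) by blast
      moreover have "B \<subseteq> S" using CD(1,3,5) assms(2) by blast
      ultimately show "B \<in> ?X" using CD(2) by simp
    qed
  qed
  have "card ?X = card ?Y" using bij_betw_same_card[OF bij] .
  also have "\<dots> = (card A choose d) * (card (S - A) choose (b - d))"
    using fA assms(1) by (simp add: card_cartesian_product n_subsets)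
  also have "card (S - A) = card S - card A" using card_Diff_subset[OF fA assms(2)] .
  finally show ?thesis .
qed

definition Sub :: "'a set \<Rightarrow> nat \<Rightarrow> 'a set set" where
  "Sub S k = {A. A \<subseteq> S \<and> card A = k}"

lemma finite_Sub: "finite S \<Longrightarrow> finite (Sub S k)"
  unfolding Sub_def by (rule finite_subset[of _ "Pow S"]) auto

lemma Fm_Sub:
  assumes "finite S"
  shows "Fm S p k = (\<Sum>A\<in>Sub S k. if p ` A = A then sR p A else 0)"
proof -
  have "{A. A \<subseteq> S \<and> p ` A = A \<and> card A = k} = {A \<in> Sub S k. p ` A = A}"
    unfolding Sub_def by blast
  then show ?thesis unfolding Fm_def using sum.inter_filter[OF finite_Sub[OF assms]] by simp
qed

definition Hw :: "'a set \<Rightarrow> 'a set \<Rightarrow> 'a set \<Rightarrow> int" where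
  "Hw S A B = (\<Sum>p\<in>Stab S A B. sign p * sR p A * sR p B)"

lemma Hw_formula:
  assumes "finite S" "A \<subseteq> S" "B \<subseteq> S"
  shows "Hw S A B = (if card (A \<inter> B) \<le> 1 \<and> card (S - (A \<union> B)) \<le> 1
                     then int (fact (card (A - B)) * fact (card (B - A))) else 0)"
proof -
  have "Hw S A B = (\<Sum>p\<in>Stab S A B. sR p (A \<inter> B) * sR p (S - (A \<union> B)))"
    unfolding Hw_def by (rule sum.cong[OF refl]) (rule weight_identity[OF assms(1) _ assms(2,3)])
  then show ?thesis using H_good[OF assms] H_vanish[OF assms] by auto
qed

lemma swap_sum:
  assumes "finite S"
  shows "(\<Sum>p\<in>{p. p permutes S}. sign p * Fm S p a * Fm S p b) = (\<Sum>A\<in>Sub S a. \<Sum>B\<in>Sub S b. Hw S A B)"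
proof -
  let ?P = "{p. p permutes S}"
  let ?w = "\<lambda>p A B. if p \<in> Stab S A B then sign p * sR p A * sR p B else 0"
  have finP: "finite ?P" using finite_permutations[OF assms] .
  have 1: "sign p * Fm S p a * Fm S p b = (\<Sum>A\<in>Sub S a. \<Sum>B\<in>Sub S b. ?w p A B)" if p: "p permutes S" for p
  proof -
    have "sign p * Fm S p a * Fm S p b = (\<Sum>A\<in>Sub S a. sign p * (if p ` A = A then sR p A else 0))
        * (\<Sum>B\<in>Sub S b. (if p ` B = B then sR p B else 0))"
      unfolding Fm_Sub[OF assms] by (simp add: sum_distrib_left)
    also have "\<dots> = (\<Sum>A\<in>Sub S a. \<Sum>B\<in>Sub S b.
        sign p * (if p ` A = A then sR p A else 0) * (if p ` B = B then sR p B else 0))"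
      by (rule sum_product)
    also have "\<dots> = (\<Sum>A\<in>Sub S a. \<Sum>B\<in>Sub S b. ?w p A B)"
      by (intro sum.cong refl) (use p in \<open>auto simp: Stab_def\<close>)
    finally show ?thesis .
  qed
  have "(\<Sum>p\<in>?P. sign p * Fm S p a * Fm S p b) = (\<Sum>p\<in>?P. \<Sum>A\<in>Sub S a. \<Sum>B\<in>Sub S b. ?w p A B)"
    by (rule sum.cong[OF refl]) (use 1 in simp)
  also have "\<dots> = (\<Sum>A\<in>Sub S a. \<Sum>p\<in>?P. \<Sum>B\<in>Sub S b. ?w p A B)" by (rule sum.swap)
  also have "\<dots> = (\<Sum>A\<in>Sub S a. \<Sum>B\<in>Sub S b. \<Sum>p\<in>?P. ?w p A B)"
    by (rule sum.cong[OF refl]) (rule sum.swap)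
  also have "\<dots> = (\<Sum>A\<in>Sub S a. \<Sum>B\<in>Sub S b. Hw S A B)"
  proof (intro sum.cong refl)
    fix A B
    have "Stab S A B = {p \<in> ?P. p \<in> Stab S A B}" unfolding Stab_def by blast
    then show "(\<Sum>p\<in>?P. ?w p A B) = Hw S A B"
      unfolding Hw_def using sum.inter_filter[OF finP, of "\<lambda>p. sign p * sR p A * sR p B" "\<lambda>p. p \<in> Stab S A B"]
      by simp
  qed
  finally show ?thesis .
qed

definition Gn :: "nat \<Rightarrow> nat \<Rightarrow> nat \<Rightarrow> nat \<Rightarrow> nat" where
  "Gn n a b d = (if d \<le> 1 \<and> n \<le> a + b - d + 1 then fact (a - d) * fact (b - d) else 0)"

lemma Hw_Gn:
  assumes "finite S" "A \<in> Sub S a" "B \<in> Sub S b"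
  shows "Hw S A B = int (Gn (card S) a b (card (A \<inter> B)))"
proof -
  have AB: "A \<subseteq> S" "card A = a" "B \<subseteq> S" "card B = b" using assms(2,3) unfolding Sub_def by auto
  have fA: "finite A" "finite B" using AB assms(1) finite_subset by blast+
  let ?d = "card (A \<inter> B)"
  have c1: "card (A - B) = a - ?d" using card_Diff_subset_Int[of A B] fA AB by simp
  have c2: "card (B - A) = b - ?d" using card_Diff_subset_Int[of B A] fA AB by (simp add: Int_commute)
  have cu: "card (A \<union> B) = a + b - ?d" using card_Un_Int[OF fA] AB by simp
  have c3: "card (S - (A \<union> B)) = card S - (a + b - ?d)"
    using card_Diff_subset[of "A \<union> B" S] fA AB cu by simp
  have "(card S - (a + b - ?d) \<le> 1) = (card S \<le> a + b - ?d + 1)" by arith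
  then show ?thesis unfolding Hw_formula[OF assms(1) AB(1,3)] Gn_def c1 c2 c3 by simp
qed

lemma sum_B:
  assumes "finite S" "A \<in> Sub S a"
  shows "(\<Sum>B\<in>Sub S b. Hw S A B) =
    int (\<Sum>d\<in>{..b}. Gn (card S) a b d * ((a choose d) * ((card S - a) choose (b - d))))"
proof -
  have AS: "A \<subseteq> S" "card A = a" using assms(2) unfolding Sub_def by auto
  have finB: "finite (Sub S b)" using finite_Sub[OF assms(1)] .
  have img: "(\<lambda>B. card (A \<inter> B)) ` Sub S b \<subseteq> {..b}"
  proof
    fix d assume "d \<in> (\<lambda>B. card (A \<inter> B)) ` Sub S b"
    then obtain B where B: "B \<in> Sub S b" "d = card (A \<inter> B)" by blast
    have "finite B" using B(1) assms(1) finite_subset unfolding Sub_def by blast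
    then have "card (A \<inter> B) \<le> card B" by (intro card_mono) auto
    then show "d \<in> {..b}" using B unfolding Sub_def by auto
  qed
  have "(\<Sum>B\<in>Sub S b. Hw S A B) = (\<Sum>B\<in>Sub S b. int (Gn (card S) a b (card (A \<inter> B))))"
    by (rule sum.cong[OF refl]) (rule Hw_Gn[OF assms])
  also have "\<dots> = (\<Sum>d\<in>{..b}. \<Sum>B\<in>{B \<in> Sub S b. card (A \<inter> B) = d}. int (Gn (card S) a b (card (A \<inter> B))))"
    using sum.group[OF finB _ img, of "\<lambda>B. int (Gn (card S) a b (card (A \<inter> B)))"] by simp
  also have "\<dots> = (\<Sum>d\<in>{..b}. int (Gn (card S) a b d * ((a choose d) * ((card S - a) choose (b - d)))))"
  proof (rule sum.cong[OF refl])
    fix d assume d: "d \<in> {..b}"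
    have "(\<Sum>B\<in>{B \<in> Sub S b. card (A \<inter> B) = d}. int (Gn (card S) a b (card (A \<inter> B))))
        = (\<Sum>B\<in>{B \<in> Sub S b. card (A \<inter> B) = d}. int (Gn (card S) a b d))"
      by (rule sum.cong) auto
    also have "\<dots> = int (card {B \<in> Sub S b. card (A \<inter> B) = d}) * int (Gn (card S) a b d)" by simp
    also have "card {B \<in> Sub S b. card (A \<inter> B) = d} = (a choose d) * ((card S - a) choose (b - d))"
    proof -
      have "{B \<in> Sub S b. card (A \<inter> B) = d} = {B. (B \<subseteq> S \<and> card B = b) \<and> card (A \<inter> B) = d}"
        unfolding Sub_def by blast
      then show ?thesis using card_B_given_meet[OF assms(1) AS(1), of d b] d AS(2) by simp
    qed
    finally show "(\<Sum>B\<in>{B \<in> Sub S b. card (A \<inter> B) = d}. int (Gn (card S) a b (card (A \<inter> B))))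
        = int (Gn (card S) a b d * ((a choose d) * ((card S - a) choose (b - d))))"
      by (simp add: mult.commute)
  qed
  also have "\<dots> = int (\<Sum>d\<in>{..b}. Gn (card S) a b d * ((a choose d) * ((card S - a) choose (b - d))))"
    by (simp only: of_nat_sum)
  finally show ?thesis .
qed

lemma final_arith:
  "(n choose a) * (\<Sum>d\<in>{..b}. Gn n a b d * ((a choose d) * ((n - a) choose (b - d))))
    = fact n * card {z::nat. z \<le> 1 \<and> z \<le> a \<and> z \<le> b \<and> a + b \<le> n + z \<and> n + z \<le> a + b + 1}"
proof -
  let ?P = "\<lambda>z::nat. z \<le> 1 \<and> z \<le> a \<and> z \<le> b \<and> a + b \<le> n + z \<and> n + z \<le> a + b + 1"
  have "(n choose a) * (\<Sum>d\<in>{..b}. Gn n a b d * ((a choose d) * ((n - a) choose (b - d))))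
      = (\<Sum>d\<in>{..b}. (n choose a) * (Gn n a b d * ((a choose d) * ((n - a) choose (b - d)))))"
    by (simp add: sum_distrib_left)
  also have "\<dots> = (\<Sum>d\<in>{..b}. fact n * (if ?P d then 1 else 0))"
  proof (rule sum.cong[OF refl])
    fix d assume d: "d \<in> {..b}"
    show "(n choose a) * (Gn n a b d * ((a choose d) * ((n - a) choose (b - d)))) = fact n * (if ?P d then 1 else 0)"
    proof (cases "d \<le> 1")
      case True
      have "Gn n a b d = (if n \<le> a + b - d + 1 then fact (a - d) * fact (b - d) else 0)"
        unfolding Gn_def using True by simp
      then show ?thesis using term_identity[OF True, of b n a] d True by simp
    next
      case False
      then show ?thesis unfolding Gn_def by simp
    qed
  qed
  also have "\<dots> = fact n * (\<Sum>d\<in>{..b}. (if ?P d then 1 else 0))"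
    by (simp add: sum_distrib_left)
  also have "(\<Sum>d\<in>{..b}. (if ?P d then 1 else 0)) = card {d \<in> {..b}. ?P d}"
    using sum.inter_filter[of "{..b}" "\<lambda>_. (1::nat)" ?P] by simp
  also have "{d \<in> {..b}. ?P d} = {z. ?P z}" by auto
  finally show ?thesis .
qed

lemma main_count:
  assumes "finite S"
  shows "(\<Sum>p\<in>{p. p permutes S}. sign p * Fm S p a * Fm S p b) = int (fact (card S) * qstar (card S) a b)"
proof -
  let ?K = "\<Sum>d\<in>{..b}. Gn (card S) a b d * ((a choose d) * ((card S - a) choose (b - d)))"
  have "(\<Sum>p\<in>{p. p permutes S}. sign p * Fm S p a * Fm S p b) = (\<Sum>A\<in>Sub S a. \<Sum>B\<in>Sub S b. Hw S A B)"
    by (rule swap_sum[OF assms])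
  also have "\<dots> = (\<Sum>A\<in>Sub S a. int ?K)"
    by (rule sum.cong[OF refl]) (rule sum_B[OF assms])
  also have "\<dots> = int (card (Sub S a) * ?K)" by simp
  also have "card (Sub S a) = card S choose a" unfolding Sub_def using n_subsets[OF assms] .
  also have "(card S choose a) * ?K = fact (card S) * qstar (card S) a b"
    unfolding qstar_formula by (rule final_arith)
  finally show ?thesis .
qed

lemma E_Fm:
  assumes "\<sigma> permutes {1..n}"
  shows "E_poly (int m) (cycle_count n \<sigma>) = Fm {1..n} \<sigma> m"
proof -
  let ?S = "{1..n::nat}"
  have fS: "finite ?S" by simp
  note OF = orbs_facts[OF fS assms]
  have cc: "cycle_count n \<sigma> i = card {c \<in> orbs \<sigma> ?S. card c = i}" for i
  proof -
    have "{orbit \<sigma> x | x. x \<in> {1..n} \<and> card (orbit \<sigma> x) = i} = {c \<in> orbs \<sigma> ?S. card c = i}"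
    proof (rule set_eqI)
      fix c
      show "c \<in> {orbit \<sigma> x | x. x \<in> {1..n} \<and> card (orbit \<sigma> x) = i} \<longleftrightarrow> c \<in> {c \<in> orbs \<sigma> ?S. card c = i}"
        unfolding orbs_def mem_Collect_eq image_iff by fastforce
    qed
    then show ?thesis unfolding cycle_count_def by simp
  qed
  have seteq: "{T. T \<subseteq> orbs \<sigma> ?S \<and> card (\<Union>T) = m} = {T. T \<subseteq> orbs \<sigma> ?S \<and> sum card T = m}"
  proof -
    have "card (\<Union>T) = sum card T" if "T \<subseteq> orbs \<sigma> ?S" for T
    proof (rule card_Union_disjoint)
      show "pairwise disjnt T" using pairwise_subset[OF OF(3) that] .
      show "\<And>A. A \<in> T \<Longrightarrow> finite A" using OF(1) that by blast
    qed
    then show ?thesis by (intro Collect_cong) auto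
  qed
  have pos: "\<And>c. c \<in> orbs \<sigma> ?S \<Longrightarrow> card c \<ge> 1"
  proof -
    fix c assume "c \<in> orbs \<sigma> ?S"
    then have "c \<noteq> {}" "finite c" using OF(1) by auto
    then show "card c \<ge> 1" by (simp add: Suc_le_eq card_gt_0_iff)
  qed
  have "Fm ?S \<sigma> m = (\<Sum>T \<in> {T. T \<subseteq> orbs \<sigma> ?S \<and> sum card T = m}. (-1) ^ (m - card T))"
    using Fm_orbs[OF fS assms] seteq by simp
  also have "\<dots> = (\<Sum>a \<in> partitions_mult m. (-1) ^ (m - (\<Sum>i=1..m. a i)) *
        (\<Prod>i=1..m. int (card {c\<in>orbs \<sigma> ?S. card c = i} choose a i)))"
    by (rule partition_count[OF OF(4) pos])
  also have "\<dots> = E_poly (int m) (cycle_count n \<sigma>)"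
    unfolding E_poly_def cc by simp
  finally show ?thesis by simp
qed

lemma sum_S_conj:
  "(\<Sum>\<sigma>\<in>{\<sigma>. \<sigma> permutes {1..n}}. sign \<sigma> * S_conj k l (cycle_count n \<sigma>)) =
     (if l > 0 then int (fact n * qstar n k l) - int (fact n * qstar n (k + 1) (l - 1))
      else int (fact n * qstar n k l))"
proof -
  let ?S = "{1..n::nat}"
  have cS: "card ?S = n" by simp
  have fS: "finite ?S" by simp
  show ?thesis
  proof (cases "l > 0")
    case True
    have Sc: "S_conj k l (cycle_count n \<sigma>) = Fm ?S \<sigma> k * Fm ?S \<sigma> l - Fm ?S \<sigma> (k + 1) * Fm ?S \<sigma> (l - 1)"
      if "\<sigma> permutes ?S" for \<sigma>
    proof -
      have "int k + 1 = int (k + 1)" "int l - 1 = int (l - 1)" using True by auto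
      then show ?thesis unfolding S_conj_def using E_Fm[OF that] by metis
    qed
    have "(\<Sum>\<sigma>\<in>{\<sigma>. \<sigma> permutes ?S}. sign \<sigma> * S_conj k l (cycle_count n \<sigma>)) =
        (\<Sum>\<sigma>\<in>{\<sigma>. \<sigma> permutes ?S}. sign \<sigma> * Fm ?S \<sigma> k * Fm ?S \<sigma> l - sign \<sigma> * Fm ?S \<sigma> (k + 1) * Fm ?S \<sigma> (l - 1))"
    proof (rule sum.cong[OF refl])
      fix \<sigma> assume "\<sigma> \<in> {\<sigma>. \<sigma> permutes ?S}"
      then have e: "S_conj k l (cycle_count n \<sigma>) = Fm ?S \<sigma> k * Fm ?S \<sigma> l - Fm ?S \<sigma> (k + 1) * Fm ?S \<sigma> (l - 1)"
        using Sc by blast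
      show "sign \<sigma> * S_conj k l (cycle_count n \<sigma>) = sign \<sigma> * Fm ?S \<sigma> k * Fm ?S \<sigma> l - sign \<sigma> * Fm ?S \<sigma> (k + 1) * Fm ?S \<sigma> (l - 1)"
        unfolding e by (simp only: right_diff_distrib mult.assoc)
    qed
    also have "\<dots> = int (fact n * qstar n k l) - int (fact n * qstar n (k + 1) (l - 1))"
      using main_count[OF fS, of k l] main_count[OF fS, of "k + 1" "l - 1"] unfolding cS
      by (simp only: sum_subtractf)
    finally show ?thesis using True by simp
  next
    case False
    then have l0: "l = 0" by simp
    have Sc: "S_conj k l (cycle_count n \<sigma>) = Fm ?S \<sigma> k * Fm ?S \<sigma> l"
      if "\<sigma> permutes ?S" for \<sigma>
    proof -
      have z: "E_poly (int l - 1) (cycle_count n \<sigma>) = 0" using l0 unfolding E_poly_def by simp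
      show ?thesis unfolding S_conj_def z E_Fm[OF that] by simp
    qed
    have "(\<Sum>\<sigma>\<in>{\<sigma>. \<sigma> permutes ?S}. sign \<sigma> * S_conj k l (cycle_count n \<sigma>)) =
        (\<Sum>\<sigma>\<in>{\<sigma>. \<sigma> permutes ?S}. sign \<sigma> * Fm ?S \<sigma> k * Fm ?S \<sigma> l)"
    proof (rule sum.cong[OF refl])
      fix \<sigma> assume "\<sigma> \<in> {\<sigma>. \<sigma> permutes ?S}"
      then have e: "S_conj k l (cycle_count n \<sigma>) = Fm ?S \<sigma> k * Fm ?S \<sigma> l" using Sc by blast
      show "sign \<sigma> * S_conj k l (cycle_count n \<sigma>) = sign \<sigma> * Fm ?S \<sigma> k * Fm ?S \<sigma> l"
        unfolding e by (simp only: mult.assoc)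
    qed
    also have "\<dots> = int (fact n * qstar n k l)"
      using main_count[OF fS, of k l] unfolding cS .
    finally show ?thesis using False by simp
  qed
qed

theorem corollary3p3:
  fixes k l n :: nat
  assumes "l \<le> k"
  shows "signed_moment n (S_conj k l) =
    (if l > 0 then real (qstar n k l) - real (qstar n (k + 1) (l - 1))
     else real (qstar n k l))"
proof -
  have "signed_moment n (S_conj k l) =
      (1 / fact n) * real_of_int (\<Sum>\<sigma>\<in>{\<sigma>. \<sigma> permutes {1..n}}. sign \<sigma> * S_conj k l (cycle_count n \<sigma>))"
    unfolding signed_moment_def by (simp only: of_int_sum)
  also have "\<dots> = (if l > 0 then real (qstar n k l) - real (qstar n (k + 1) (l - 1))
     else real (qstar n k l))"
    unfolding sum_S_conj by (simp add: field_simps)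
  finally show ?thesis .
qed


end
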